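(* Let $S$ be a solid and let $x,y\in S^*$. If $e(x)y\le e(y)x$, then $R(x)\le R(y)$.
   Context: A solid is a set $S$ with two binary operations $+$ and $\cdot$ (written $xy$) and a binary relation $\le$ satisfying the following axioms (all variables range over $S$). (A1) $+$ is associative and commutative. (A2) For each $x$ there is $e$ with $x+e=x$ such that $e+f=e$ for every $f$ with $x+f=x$; this $e$ is unique and is denoted $e(x)$ (the magnitude of $x$). An element $x$ with $x=e(x)$ is called a magnitude. (A3) For each $x$ there is $s$ with $x+s=e(x)$ and $e(s)=e(x)$; it is unique and denoted $-x$; write $x-y$ for $x+(-y)$. (A4) $e(x+y)=e(x)$ or $e(x+y)=e(y)$. (M1) $\cdot$ is associative and commutative. (M2) For each $x\neq e(x)$ there is $u$ with $xu=x$ such that $uv=u$ for every $v$ with $xv=x$; it is unique and denoted $u(x)$. (M3) For each $x\ne e(x)$ there is $d$ with $xd=u(x)$ and $u(d)=u(x)$; it is unique and denoted $x^{-1}$; write $y/x$ for $yx^{-1}$. (M4) If $x\neq e(x)$ and $y\ne e(y)$ then $u(xy)=u(x)$ or $u(xy)=u(y)$. (O1) $\le$ is a total order (reflexive, antisymmetric, transitive, total); $x<y$ means $x\le y$ and $x\ne y$. (O2) $x\le y\Rightarrow x+z\le y+z$. (O3) $y+e(x)=e(x)\Rightarrow (y\le e(x)$ and $-y\le e(x))$. (O4) $(e(x)<x$ and $y\le z)\Rightarrow xy\le xz$. (O5) $e(y)\le y\le z\Rightarrow e(x)y\le e(x)z$. (AM1) For all $x,y$ there is $z$ with $e(x)y=e(z)$.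 (AM2) $e(xy)=e(x)y+e(y)x$. (AM3) If $x\ne e(x)$ then $e(u(x))=e(x)/x$. (AM4) (distributivity axiom) $xy+xz=x(y+z)+e(x)y+e(x)z$. (AM5) $-(xy)=(-x)y$. (E1) There is $m$ with $m+x=x$ for all $x$; it is unique, called zero and denoted $0$. (E2) There is $u$ with $ux=x$ for all $x$; it is unique, called one and denoted $1$. (E3) There is $M$ with $e(x)+M=M$ for all $x$. (E4) There is $x$ with $e(x)\ne 0$ and $e(x)\ne M$. (E5) For every $x$ there is $a$ with $x=a+e(x)$ and $e(a)=0$. (E6) If $x,y$ are magnitudes with $x<y$, there is $z$ with $z\ne e(z)$ and $x<z<y$. Further notation: $S^*=\{x\in S: x\ne e(x)\}$ (zeroless elements). $x$ is positive if $e(x)\le x$ and negative if $x<e(x)$; $|x|=x$ if $x$ is positive and $|x|=-x$ if $x$ is negative. $x$ is precise if $e(x)=0$. The relative uncertainty $R(x)$ is $e(u(x))$ if $x\ne e(x)$, and $M$ (from (E3)) if $x=e(x)$. *)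

theory Defs
  imports Main
begin

text \<open>A solid is modelled on the whole of a type 'a, with addition ad,
 multiplication mu and order le given as parameters.\<close>

definition mag :: "('a \<Rightarrow> 'a \<Rightarrow> 'a) \<Rightarrow> 'a \<Rightarrow> 'a" where
  "mag ad x = (THE e. ad x e = x \<and> (\<forall>f. ad x f = x \<longrightarrow> ad e f = e))"

definition neg :: "('a \<Rightarrow> 'a \<Rightarrow> 'a) \<Rightarrow> 'a \<Rightarrow> 'a" where
  "neg ad x = (THE s. ad x s = mag ad x \<and> mag ad s = mag ad x)"

definition unt :: "('a \<Rightarrow> 'a \<Rightarrow> 'a) \<Rightarrow> 'a \<Rightarrow> 'a" where
  "unt mu x = (THE u. mu x u = x \<and> (\<forall>v. mu x v = x \<longrightarrow> mu u v = u))"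

definition inv :: "('a \<Rightarrow> 'a \<Rightarrow> 'a) \<Rightarrow> 'a \<Rightarrow> 'a" where
  "inv mu x = (THE d. mu x d = unt mu x \<and> unt mu d = unt mu x)"

definition zero_s :: "('a \<Rightarrow> 'a \<Rightarrow> 'a) \<Rightarrow> 'a" where
  "zero_s ad = (THE m. \<forall>x. ad m x = x)"

text \<open>The largest magnitude M of axiom (E3) (taken to be a magnitude, which makes it unique).\<close>
definition bigM :: "('a \<Rightarrow> 'a \<Rightarrow> 'a) \<Rightarrow> 'a" where
  "bigM ad = (THE M. mag ad M = M \<and> (\<forall>x. ad (mag ad x) M = M))"

definition relunc :: "('a \<Rightarrow> 'a \<Rightarrow> 'a) \<Rightarrow> ('a \<Rightarrow> 'a \<Rightarrow> 'a) \<Rightarrow> 'a \<Rightarrow> 'a" where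
  "relunc ad mu x = (if x \<noteq> mag ad x then mag ad (unt mu x) else bigM ad)"

definition solid :: "('a \<Rightarrow> 'a \<Rightarrow> 'a) \<Rightarrow> ('a \<Rightarrow> 'a \<Rightarrow> 'a) \<Rightarrow> ('a \<Rightarrow> 'a \<Rightarrow> bool) \<Rightarrow> bool" where
  "solid ad mu le \<longleftrightarrow>
    \<comment> \<open>A1\<close>
    (\<forall>x y z. ad (ad x y) z = ad x (ad y z)) \<and> (\<forall>x y. ad x y = ad y x) \<and>
    \<comment> \<open>A2\<close>
    (\<forall>x. \<exists>!e. ad x e = x \<and> (\<forall>f. ad x f = x \<longrightarrow> ad e f = e)) \<and>
    \<comment> \<open>A3\<close>
    (\<forall>x. \<exists>!s. ad x s = mag ad x \<and> mag ad s = mag ad x) \<and>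
    \<comment> \<open>A4\<close>
    (\<forall>x y. mag ad (ad x y) = mag ad x \<or> mag ad (ad x y) = mag ad y) \<and>
    \<comment> \<open>M1\<close>
    (\<forall>x y z. mu (mu x y) z = mu x (mu y z)) \<and> (\<forall>x y. mu x y = mu y x) \<and>
    \<comment> \<open>M2\<close>
    (\<forall>x. x \<noteq> mag ad x \<longrightarrow> (\<exists>!u. mu x u = x \<and> (\<forall>v. mu x v = x \<longrightarrow> mu u v = u))) \<and>
    \<comment> \<open>M3\<close>
    (\<forall>x. x \<noteq> mag ad x \<longrightarrow> (\<exists>!d. mu x d = unt mu x \<and> unt mu d = unt mu x)) \<and>
    \<comment> \<open>M4\<close>
    (\<forall>x y. x \<noteq> mag ad x \<longrightarrow> y \<noteq> mag ad y \<longrightarrow>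
        unt mu (mu x y) = unt mu x \<or> unt mu (mu x y) = unt mu y) \<and>
    \<comment> \<open>O1\<close>
    (\<forall>x. le x x) \<and> (\<forall>x y. le x y \<longrightarrow> le y x \<longrightarrow> x = y) \<and>
    (\<forall>x y z. le x y \<longrightarrow> le y z \<longrightarrow> le x z) \<and> (\<forall>x y. le x y \<or> le y x) \<and>
    \<comment> \<open>O2\<close>
    (\<forall>x y z. le x y \<longrightarrow> le (ad x z) (ad y z)) \<and>
    \<comment> \<open>O3\<close>
    (\<forall>x y. ad y (mag ad x) = mag ad x \<longrightarrow> le y (mag ad x) \<and> le (neg ad y) (mag ad x)) \<and>
    \<comment> \<open>O4\<close>
    (\<forall>x y z. le (mag ad x) x \<and> mag ad x \<noteq> x \<and> le y z \<longrightarrow> le (mu x y) (mu x z)) \<and>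
    \<comment> \<open>O5\<close>
    (\<forall>x y z. le (mag ad y) y \<and> le y z \<longrightarrow> le (mu (mag ad x) y) (mu (mag ad x) z)) \<and>
    \<comment> \<open>AM1\<close>
    (\<forall>x y. \<exists>z. mu (mag ad x) y = mag ad z) \<and>
    \<comment> \<open>AM2\<close>
    (\<forall>x y. mag ad (mu x y) = ad (mu (mag ad x) y) (mu (mag ad y) x)) \<and>
    \<comment> \<open>AM3\<close>
    (\<forall>x. x \<noteq> mag ad x \<longrightarrow> mag ad (unt mu x) = mu (mag ad x) (inv mu x)) \<and>
    \<comment> \<open>AM4\<close>
    (\<forall>x y z. ad (mu x y) (mu x z) = ad (ad (mu x (ad y z)) (mu (mag ad x) y)) (mu (mag ad x) z)) \<and>
    \<comment> \<open>AM5\<close>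
    (\<forall>x y. neg ad (mu x y) = mu (neg ad x) y) \<and>
    \<comment> \<open>E1\<close>
    (\<exists>!m. \<forall>x. ad m x = x) \<and>
    \<comment> \<open>E2\<close>
    (\<exists>!u. \<forall>x. mu u x = x) \<and>
    \<comment> \<open>E3\<close>
    (\<exists>M. \<forall>x. ad (mag ad x) M = M) \<and>
    \<comment> \<open>E4 (for any M as in E3)\<close>
    (\<exists>x. mag ad x \<noteq> zero_s ad \<and> (\<forall>M. (\<forall>y. ad (mag ad y) M = M) \<longrightarrow> mag ad x \<noteq> M)) \<and>
    \<comment> \<open>E5\<close>
    (\<forall>x. \<exists>a. x = ad a (mag ad x) \<and> mag ad a = zero_s ad) \<and>
    \<comment> \<open>E6\<close>
    (\<forall>x y. x = mag ad x \<longrightarrow> y = mag ad y \<longrightarrow> le x y \<longrightarrow> x \<noteq> y \<longrightarrow>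
        (\<exists>z. z \<noteq> mag ad z \<and> le x z \<and> z \<noteq> x \<and> le z y \<and> z \<noteq> y))"

end

theory Submission
  imports Defs
begin


locale sl =
  fixes ad mu :: "'a \<Rightarrow> 'a \<Rightarrow> 'a" and le :: "'a \<Rightarrow> 'a \<Rightarrow> bool"
  assumes S: "solid ad mu le"
begin

lemmas ax = S[unfolded solid_def]

abbreviation E where "E x \<equiv> mag ad x"
abbreviation N where "N x \<equiv> neg ad x"
abbreviation U where "U x \<equiv> unt mu x"
abbreviation I where "I x \<equiv> inv mu x"

lemma aassoc: "ad (ad x y) w = ad x (ad y w)" using ax[THEN conjunct1] by blast
lemma acomm: "ad x y = ad y x" using ax[THEN conjunct2, THEN conjunct1] by blast
lemma A2: "\<exists>!e. ad x e = x \<and> (\<forall>f. ad x f = x \<longrightarrow> ad e f = e)" using ax[THEN conjunct2, THEN conjunct2, THEN conjunct1] by blast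
lemma A3: "\<exists>!s. ad x s = E x \<and> E s = E x" using ax[THEN conjunct2, THEN conjunct2, THEN conjunct2, THEN conjunct1] by blast
lemma a4: "E (ad x y) = E x \<or> E (ad x y) = E y" using ax[THEN conjunct2, THEN conjunct2, THEN conjunct2, THEN conjunct2, THEN conjunct1] by blast
lemma massoc: "mu (mu x y) w = mu x (mu y w)" using ax[THEN conjunct2, THEN conjunct2, THEN conjunct2, THEN conjunct2, THEN conjunct2, THEN conjunct1] by blast
lemma mcomm: "mu x y = mu y x" using ax[THEN conjunct2, THEN conjunct2, THEN conjunct2, THEN conjunct2, THEN conjunct2, THEN conjunct2, THEN conjunct1] by blast
lemma M2: "x \<noteq> E x \<Longrightarrow> \<exists>!u. mu x u = x \<and> (\<forall>v. mu x v = x \<longrightarrow> mu u v = u)" using ax[THEN conjunct2, THEN conjunct2, THEN conjunct2, THEN conjunct2, THEN conjunct2, THEN conjunct2, THEN conjunct2, THEN conjunct1] by blast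
lemma M3: "x \<noteq> E x \<Longrightarrow> \<exists>!d. mu x d = U x \<and> U d = U x" using ax[THEN conjunct2, THEN conjunct2, THEN conjunct2, THEN conjunct2, THEN conjunct2, THEN conjunct2, THEN conjunct2, THEN conjunct2, THEN conjunct1] by blast
lemma refl: "le x x" using ax[THEN conjunct2, THEN conjunct2, THEN conjunct2, THEN conjunct2, THEN conjunct2, THEN conjunct2, THEN conjunct2, THEN conjunct2, THEN conjunct2, THEN conjunct2, THEN conjunct1] by blast
lemma anti: "le x y \<Longrightarrow> le y x \<Longrightarrow> x = y" using ax[THEN conjunct2, THEN conjunct2, THEN conjunct2, THEN conjunct2, THEN conjunct2, THEN conjunct2, THEN conjunct2, THEN conjunct2, THEN conjunct2, THEN conjunct2, THEN conjunct2, THEN conjunct1] by blast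
lemma trans: "le x y \<Longrightarrow> le y w \<Longrightarrow> le x w" using ax[THEN conjunct2, THEN conjunct2, THEN conjunct2, THEN conjunct2, THEN conjunct2, THEN conjunct2, THEN conjunct2, THEN conjunct2, THEN conjunct2, THEN conjunct2, THEN conjunct2, THEN conjunct2, THEN conjunct1] by blast
lemma total: "le x y \<or> le y x" using ax[THEN conjunct2, THEN conjunct2, THEN conjunct2, THEN conjunct2, THEN conjunct2, THEN conjunct2, THEN conjunct2, THEN conjunct2, THEN conjunct2, THEN conjunct2, THEN conjunct2, THEN conjunct2, THEN conjunct2, THEN conjunct1] by blast
lemma o2: "le x y \<Longrightarrow> le (ad x w) (ad y w)" using ax[THEN conjunct2, THEN conjunct2, THEN conjunct2, THEN conjunct2, THEN conjunct2, THEN conjunct2, THEN conjunct2, THEN conjunct2, THEN conjunct2, THEN conjunct2, THEN conjunct2, THEN conjunct2, THEN conjunct2, THEN conjunct2, THEN conjunct1] by blast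
lemma o3: "ad y (E x) = E x \<Longrightarrow> le y (E x) \<and> le (N y) (E x)" using ax[THEN conjunct2, THEN conjunct2, THEN conjunct2, THEN conjunct2, THEN conjunct2, THEN conjunct2, THEN conjunct2, THEN conjunct2, THEN conjunct2, THEN conjunct2, THEN conjunct2, THEN conjunct2, THEN conjunct2, THEN conjunct2, THEN conjunct2, THEN conjunct1] by blast
lemma o4: "le (E x) x \<Longrightarrow> E x \<noteq> x \<Longrightarrow> le y w \<Longrightarrow> le (mu x y) (mu x w)" using ax[THEN conjunct2, THEN conjunct2, THEN conjunct2, THEN conjunct2, THEN conjunct2, THEN conjunct2, THEN conjunct2, THEN conjunct2, THEN conjunct2, THEN conjunct2, THEN conjunct2, THEN conjunct2, THEN conjunct2, THEN conjunct2, THEN conjunct2, THEN conjunct2, THEN conjunct1] by blast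
lemma o5: "le (E y) y \<Longrightarrow> le y w \<Longrightarrow> le (mu (E x) y) (mu (E x) w)" using ax[THEN conjunct2, THEN conjunct2, THEN conjunct2, THEN conjunct2, THEN conjunct2, THEN conjunct2, THEN conjunct2, THEN conjunct2, THEN conjunct2, THEN conjunct2, THEN conjunct2, THEN conjunct2, THEN conjunct2, THEN conjunct2, THEN conjunct2, THEN conjunct2, THEN conjunct2, THEN conjunct1] by blast
lemma am1: "\<exists>w. mu (E x) y = E w" using ax[THEN conjunct2, THEN conjunct2, THEN conjunct2, THEN conjunct2, THEN conjunct2, THEN conjunct2, THEN conjunct2, THEN conjunct2, THEN conjunct2, THEN conjunct2, THEN conjunct2, THEN conjunct2, THEN conjunct2, THEN conjunct2, THEN conjunct2, THEN conjunct2, THEN conjunct2, THEN conjunct2, THEN conjunct1] by blast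
lemma am2: "E (mu x y) = ad (mu (E x) y) (mu (E y) x)" using ax[THEN conjunct2, THEN conjunct2, THEN conjunct2, THEN conjunct2, THEN conjunct2, THEN conjunct2, THEN conjunct2, THEN conjunct2, THEN conjunct2, THEN conjunct2, THEN conjunct2, THEN conjunct2, THEN conjunct2, THEN conjunct2, THEN conjunct2, THEN conjunct2, THEN conjunct2, THEN conjunct2, THEN conjunct2, THEN conjunct1] by blast
lemma am3: "x \<noteq> E x \<Longrightarrow> E (U x) = mu (E x) (I x)" using ax[THEN conjunct2, THEN conjunct2, THEN conjunct2, THEN conjunct2, THEN conjunct2, THEN conjunct2, THEN conjunct2, THEN conjunct2, THEN conjunct2, THEN conjunct2, THEN conjunct2, THEN conjunct2, THEN conjunct2, THEN conjunct2, THEN conjunct2, THEN conjunct2, THEN conjunct2, THEN conjunct2, THEN conjunct2, THEN conjunct2, THEN conjunct1] by blast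
lemma am4: "ad (mu x y) (mu x w) = ad (ad (mu x (ad y w)) (mu (E x) y)) (mu (E x) w)" using ax[THEN conjunct2, THEN conjunct2, THEN conjunct2, THEN conjunct2, THEN conjunct2, THEN conjunct2, THEN conjunct2, THEN conjunct2, THEN conjunct2, THEN conjunct2, THEN conjunct2, THEN conjunct2, THEN conjunct2, THEN conjunct2, THEN conjunct2, THEN conjunct2, THEN conjunct2, THEN conjunct2, THEN conjunct2, THEN conjunct2, THEN conjunct2, THEN conjunct1] by blast
lemma am5: "N (mu x y) = mu (N x) y" using ax[THEN conjunct2, THEN conjunct2, THEN conjunct2, THEN conjunct2, THEN conjunct2, THEN conjunct2, THEN conjunct2, THEN conjunct2, THEN conjunct2, THEN conjunct2, THEN conjunct2, THEN conjunct2, THEN conjunct2, THEN conjunct2, THEN conjunct2, THEN conjunct2, THEN conjunct2, THEN conjunct2, THEN conjunct2, THEN conjunct2, THEN conjunct2, THEN conjunct2, THEN conjunct1] by blast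
lemma E1: "\<exists>!m. \<forall>x. ad m x = x" using ax[THEN conjunct2, THEN conjunct2, THEN conjunct2, THEN conjunct2, THEN conjunct2, THEN conjunct2, THEN conjunct2, THEN conjunct2, THEN conjunct2, THEN conjunct2, THEN conjunct2, THEN conjunct2, THEN conjunct2, THEN conjunct2, THEN conjunct2, THEN conjunct2, THEN conjunct2, THEN conjunct2, THEN conjunct2, THEN conjunct2, THEN conjunct2, THEN conjunct2, THEN conjunct2, THEN conjunct1] by blast
lemma E2: "\<exists>!u. \<forall>x. mu u x = x" using ax[THEN conjunct2, THEN conjunct2, THEN conjunct2, THEN conjunct2, THEN conjunct2, THEN conjunct2, THEN conjunct2, THEN conjunct2, THEN conjunct2, THEN conjunct2, THEN conjunct2, THEN conjunct2, THEN conjunct2, THEN conjunct2, THEN conjunct2, THEN conjunct2, THEN conjunct2, THEN conjunct2, THEN conjunct2, THEN conjunct2, THEN conjunct2, THEN conjunct2, THEN conjunct2, THEN conjunct2, THEN conjunct1] by blast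
lemma e4: "\<exists>x. E x \<noteq> zero_s ad" using ax[THEN conjunct2, THEN conjunct2, THEN conjunct2, THEN conjunct2, THEN conjunct2, THEN conjunct2, THEN conjunct2, THEN conjunct2, THEN conjunct2, THEN conjunct2, THEN conjunct2, THEN conjunct2, THEN conjunct2, THEN conjunct2, THEN conjunct2, THEN conjunct2, THEN conjunct2, THEN conjunct2, THEN conjunct2, THEN conjunct2, THEN conjunct2, THEN conjunct2, THEN conjunct2, THEN conjunct2, THEN conjunct2, THEN conjunct2, THEN conjunct1] by blast
lemma e5: "\<exists>a. x = ad a (E x) \<and> E a = zero_s ad" using ax[THEN conjunct2, THEN conjunct2, THEN conjunct2, THEN conjunct2, THEN conjunct2, THEN conjunct2, THEN conjunct2, THEN conjunct2, THEN conjunct2, THEN conjunct2, THEN conjunct2, THEN conjunct2, THEN conjunct2, THEN conjunct2, THEN conjunct2, THEN conjunct2, THEN conjunct2, THEN conjunct2, THEN conjunct2, THEN conjunct2, THEN conjunct2, THEN conjunct2, THEN conjunct2, THEN conjunct2, THEN conjunct2, THEN conjunct2, THEN conjunct2, THEN conjunct1] by blast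
lemma e6: "x = E x \<Longrightarrow> y = E y \<Longrightarrow> le x y \<Longrightarrow> x \<noteq> y \<Longrightarrow>
        (\<exists>z. z \<noteq> E z \<and> le x z \<and> z \<noteq> x \<and> le z y \<and> z \<noteq> y)" using ax[THEN conjunct2, THEN conjunct2, THEN conjunct2, THEN conjunct2, THEN conjunct2, THEN conjunct2, THEN conjunct2, THEN conjunct2, THEN conjunct2, THEN conjunct2, THEN conjunct2, THEN conjunct2, THEN conjunct2, THEN conjunct2, THEN conjunct2, THEN conjunct2, THEN conjunct2, THEN conjunct2, THEN conjunct2, THEN conjunct2, THEN conjunct2, THEN conjunct2, THEN conjunct2, THEN conjunct2, THEN conjunct2, THEN conjunct2, THEN conjunct2, THEN conjunct2] by blast

lemma eprop: "ad x (E x) = x \<and> (\<forall>f. ad x f = x \<longrightarrow> ad (E x) f = E x)"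
  unfolding mag_def by (rule theI'[OF A2])
lemma e1: "ad x (E x) = x" using eprop by blast
lemma e2: "ad x f = x \<Longrightarrow> ad (E x) f = E x" using eprop by blast
lemma nprop: "ad x (N x) = E x \<and> E (N x) = E x"
  unfolding neg_def by (rule theI'[OF A3])
lemma n1: "ad x (N x) = E x" using nprop by blast
lemma n2: "E (N x) = E x" using nprop by blast
lemma nu: "ad x s = E x \<Longrightarrow> E s = E x \<Longrightarrow> s = N x"
  unfolding neg_def by (rule the1_equality[OF A3, symmetric]) blast
lemma uprop: "x \<noteq> E x \<Longrightarrow> mu x (U x) = x \<and> (\<forall>v. mu x v = x \<longrightarrow> mu (U x) v = U x)"
  unfolding unt_def by (rule theI'[OF M2])
lemma u1: "x \<noteq> E x \<Longrightarrow> mu x (U x) = x" using uprop by blast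
lemma u2: "x \<noteq> E x \<Longrightarrow> mu x v = x \<Longrightarrow> mu (U x) v = U x" using uprop by blast
lemma iprop: "x \<noteq> E x \<Longrightarrow> mu x (I x) = U x \<and> U (I x) = U x"
  unfolding inv_def by (rule theI'[OF M3])
lemma i1: "x \<noteq> E x \<Longrightarrow> mu x (I x) = U x" using iprop by blast

definition Z where "Z = zero_s ad"
lemma z1: "ad Z x = x" unfolding Z_def zero_s_def by (rule theI'[OF E1, rule_format])
definition One where "One = (THE u. \<forall>x. mu u x = x)"
lemma one1: "mu One x = x" unfolding One_def by (rule theI'[OF E2, rule_format])
lemma one2: "mu x One = x" using one1 mcomm by metis




lemma ee[simp]: "E (E x) = E x"
proof -
  have "ad (E x) (E x) = E x" using e1 e2 by blast
  moreover have "\<forall>f. ad (E x) f = E x \<longrightarrow> ad (E x) f = E x" by blast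
  ultimately show ?thesis unfolding mag_def[of ad "E x"] by (intro the1_equality[OF A2]) blast
qed

lemma zr: "ad x Z = x" using z1 acomm by metis
lemma EZ[simp]: "E Z = Z"
proof -
  have "ad Z Z = Z" by (rule z1)
  thus ?thesis unfolding mag_def[of ad Z] by (intro the1_equality[OF A2]) (auto simp: z1)
qed

lemma midem: "E m = m \<Longrightarrow> ad m m = m" using e1 by metis

lemma magsum: assumes "E a = a" "E b = b" shows "ad a b = a \<or> ad a b = b"
proof -
  have p: "\<forall>f. ad (ad a b) f = ad a b \<longrightarrow> ad (E (ad a b)) f = E (ad a b)" using e2 by blast
  have h1: "ad (ad a b) b = ad a b" using aassoc midem[OF assms(2)] by metis
  have h2: "ad (ad a b) a = ad a b" using aassoc acomm midem[OF assms(1)] by metis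
  from a4[of a b] show ?thesis
  proof
    assume "E (ad a b) = E a" thus ?thesis using p h1 assms by metis
  next
    assume "E (ad a b) = E b" thus ?thesis using p h2 assms acomm by metis
  qed
qed

lemma sum_mag: "E a = a \<Longrightarrow> E b = b \<Longrightarrow> E (ad a b) = ad a b" using magsum by metis

lemma mag_le: assumes "E a = a" "E b = b" shows "le a b \<longleftrightarrow> ad a b = b"
proof
  assume "ad a b = b" thus "le a b" using o3[of a b] assms by metis
next
  assume l: "le a b"
  show "ad a b = b"
  proof (cases "ad a b = b")
    case False
    hence "ad a b = a" using magsum assms by metis
    hence "ad b a = a" using acomm by metis
    hence "le b a" using o3[of b a] assms by metis
    hence "a = b" using anti l by metis
    thus ?thesis using midem assms by metis
  qed
qed

lemma Z_le: "E m = m \<Longrightarrow> le Z m" using mag_le[of Z m] z1 EZ by metis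

lemma neg_mag: "E m = m \<Longrightarrow> N m = m" using nu[of m m] midem by metis
lemma negneg: "N (N x) = x"
proof -
  have "ad (N x) x = E (N x)" using n1 n2 acomm by metis
  thus ?thesis using nu[of "N x" x] n2 by metis
qed

lemma absorb: assumes "E m = m" "le Z t" "le t m" shows "ad t m = m"
proof -
  have "le (ad t m) (ad m m)" using o2 assms(3) by blast
  moreover have "le (ad Z m) (ad t m)" using o2 assms(2) by blast
  ultimately show ?thesis using anti midem[OF assms(1)] z1 by metis
qed

lemma magmul: "E m = m \<Longrightarrow> E (mu m y) = mu m y"
  using am1[of m y] ee by metis
lemma magmul2: "E m = m \<Longrightarrow> E (mu y m) = mu y m"
  using magmul mcomm by metis
lemma negmul: "mu x (N y) = N (mu x y)" using am5 mcomm by metis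

lemma sum_zero: assumes "E a = a" "E b = b" "ad a b = Z" shows "a = Z"
proof -
  have "ad a b = a \<or> ad a b = b" using magsum assms by metis
  thus ?thesis
  proof
    assume "ad a b = b" hence "b = Z" using assms by metis
    thus ?thesis using assms zr by metis
  qed (use assms in metis)
qed




lemma mZ: "E (mu Z y) = mu Z y" using magmul[OF EZ] .
lemma mZ2: "E (mu y Z) = mu y Z" using magmul2[OF EZ] .

lemma one_zl: "One \<noteq> E One"
proof
  assume h: "One = E One"
  have all: "E x = x" for x
  proof -
    have "E (mu One x) = ad (mu (E One) x) (mu (E x) One)" by (rule am2)
    thus ?thesis using h one1 one2 e1 by metis
  qed
  obtain x0 where "E x0 \<noteq> Z" using e4 Z_def by metis
  then obtain w where "w \<noteq> E w" using e6[of Z "E x0"] Z_le[of "E x0"] by force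
  thus False using all by metis
qed

lemma le01: "le Z One"
proof (rule ccontr)
  assume "\<not> le Z One"
  hence l1: "le One Z" using total by metis
  have l2: "le (E One) (N One)" using o2[OF l1, of "N One"] n1 z1 by metis
  have en: "E (N One) = E One" by (rule n2)
  have zl: "E (N One) \<noteq> N One"
  proof
    assume "E (N One) = N One"
    hence "N One = E One" using en by metis
    hence "One = E One" using negneg neg_mag[of "E One"] by (metis ee)
    thus False using one_zl by metis
  qed
  have "le (mu (N One) One) (mu (N One) Z)" using o4[of "N One" One Z] l1 l2 en zl by metis
  moreover have "mu (N One) Z = Z" using am5[of One Z] one1 neg_mag[OF EZ] by metis
  ultimately have l3: "le (N One) Z" using one2 by metis
  have "le Z (E One)" using Z_le ee by metis
  hence "E One = N One" using l2 l3 anti trans by metis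
  thus False using zl en by metis
qed

lemma mulZ_le: "le (mu w Z) (E w)"
proof -
  have a: "ad (mu w One) (mu w Z) = ad (ad (mu w (ad One Z)) (mu (E w) One)) (mu (E w) Z)" by (rule am4)
  have "le (mu (E w) Z) (mu (E w) One)" using o5[of Z One w] refl le01 by (metis EZ)
  hence b: "ad (mu (E w) Z) (E w) = E w" using mag_le mZ2 one2 ee by metis
  have "ad w (mu w Z) = w" using a b zr one2 e1 aassoc acomm by metis
  hence "ad (E w) (mu w Z) = E w" using e2 by metis
  thus ?thesis using mag_le[of "mu w Z" "E w"] mZ2 ee acomm by metis
qed

lemma precZ: "E p = Z \<Longrightarrow> mu p Z = Z"
  using mulZ_le[of p] Z_le[OF mZ2[of p]] anti by metis
lemma precZ2: "E p = Z \<Longrightarrow> mu Z p = Z" using precZ mcomm by metis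

lemma mulE1: "le (mu w (E One)) (E w)"
proof -
  have a: "ad (mu w One) (mu w (N One)) = ad (ad (mu w (ad One (N One))) (mu (E w) One)) (mu (E w) (N One))" by (rule am4)
  have b: "mu w (N One) = N w" using negmul one2 by metis
  have c: "mu (E w) (N One) = E w" using negmul one2 neg_mag ee by metis
  have "E w = ad (mu w (E One)) (E w)" using a b c n1 one2 aassoc midem ee by metis
  thus ?thesis using mag_le[of "mu w (E One)" "E w"] magmul2[of "E One"] ee by metis
qed

lemma eOne: "E One = Z"
proof (rule ccontr)
  assume ne: "E One \<noteq> Z"
  obtain a where a1: "One = ad a (E One)" and a2: "E a = Z" using e5 Z_def by metis
  have aE: "mu a (E One) = Z" using mulE1[of a] a2 Z_le[OF magmul2[of "E One" a]] anti by (metis ee)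
  have zE: "le Z (E One)" using Z_le ee by metis
  have a3: "le a One" using o2[OF zE, of a] z1 a1 acomm by metis
  have a4': "le Z a"
  proof (rule ccontr)
    assume "\<not> le Z a" hence "le a Z" using total by metis
    hence "le One (E One)" using o2[of a Z "E One"] a1 z1 by metis
    hence "ad One (E One) = E One" using absorb[of "E One" One] le01 ee by metis
    thus False using e1 one_zl by metis
  qed
  obtain w where w1: "w \<noteq> E w" and w2: "le Z w" and w3: "le w (E One)"
    using e6[of Z "E One"] zE ne by (metis EZ ee)
  have wab: "ad w (E One) = E One" using absorb w2 w3 ee by metis
  have s1: "ad (mu a w) (mu a (E One)) = ad (ad (mu a (ad w (E One))) (mu (E a) w)) (mu (E a) (E One))" by (rule am4)
  have ma: "E (mu a w) = mu a w"
  proof -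
    have "mu a w = ad (mu Z w) (mu Z (E One))" using s1 wab aE a2 zr z1 by metis
    thus ?thesis using sum_mag mZ by metis
  qed
  have s2: "ad (mu w a) (mu w (E One)) = ad (ad (mu w (ad a (E One))) (mu (E w) a)) (mu (E w) (E One))" by (rule am4)
  have x1: "ad (mu (E w) a) (E w) = E w"
  proof -
    have "le (mu (E w) a) (mu (E w) One)" using o5[of a One w] a2 a3 a4' by metis
    thus ?thesis using mag_le magmul ee one2 by metis
  qed
  have x2: "ad (mu (E w) (E One)) (E w) = E w"
    using mulE1[of "E w"] mag_le magmul ee by metis
  have "ad (ad w (mu (E w) a)) (mu (E w) (E One)) = w"
  proof -
    have "ad w (mu (E w) a) = w" using x1 e1 aassoc acomm by metis
    moreover have "ad w (mu (E w) (E One)) = w" using x2 e1 aassoc acomm by metis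
    ultimately show ?thesis by metis
  qed
  hence "ad (mu w a) (mu w (E One)) = w" using s2 a1 one2 by metis
  hence "E w = w" using sum_mag ma mcomm magmul2[of "E One" w] ee by metis
  thus False using w1 by metis
qed




lemma u_prec: assumes pz: "E p = Z" and pn: "p \<noteq> Z" and pp: "le Z p"
  shows "U p = One" and "mu p (I p) = One"
proof -
  have zl: "p \<noteq> E p" using pz pn by metis
  define c where "c = U p"
  define q where "q = I p"
  have pc: "mu p c = p" using u1[OF zl] c_def by metis
  have pq: "mu p q = c" using i1[OF zl] c_def q_def by metis
  have cc: "mu c c = c" using u2[OF zl pc] c_def by metis
  have "Z = ad (mu Z c) (mu (E c) p)" using am2[of p c] pc pz by metis
  hence zc: "mu Z c = Z" using sum_zero mZ magmul ee by metis
  have zq: "mu Z q = Z" using zc pq massoc precZ2[OF pz] by metis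
  have ec: "E c = Z" using am3[OF zl] c_def q_def pz zq by metis
  define d where "d = ad One (N c)"
  have ed: "E d = Z" using a4[of One "N c"] d_def eOne n2 ec by metis
  have enc: "E (N c) = Z" using n2 ec by metis
  have pd: "mu p d = Z"
  proof -
    have "ad (mu p One) (mu p (N c)) = ad (ad (mu p (ad One (N c))) (mu (E p) One)) (mu (E p) (N c))" by (rule am4)
    moreover have "mu p (N c) = N p" using negmul pc by metis
    ultimately show ?thesis using n1 pz one2 precZ2 enc d_def zr by (metis EZ)
  qed
  have cd: "mu c d = Z"
  proof -
    have "ad (mu c One) (mu c (N c)) = ad (ad (mu c (ad One (N c))) (mu (E c) One)) (mu (E c) (N c))" by (rule am4)
    moreover have "mu c (N c) = N c" using negmul cc by metis
    ultimately show ?thesis using n1 ec one2 precZ2 enc d_def zr by (metis EZ)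
  qed
  have dd: "mu d d = d"
  proof -
    have "ad (mu d One) (mu d (N c)) = ad (ad (mu d (ad One (N c))) (mu (E d) One)) (mu (E d) (N c))" by (rule am4)
    moreover have "mu d (N c) = Z" using negmul cd mcomm neg_mag[OF EZ] by metis
    ultimately show ?thesis using ed one2 precZ2 enc d_def zr by (metis EZ)
  qed
  have cpd: "ad c d = One" using d_def aassoc acomm n1 ec zr by metis
  have d0: "d = Z"
  proof (rule ccontr)
    assume dn: "d \<noteq> Z"
    have dzl: "E d \<noteq> d" using ed dn by metis
    have dpos: "le Z d"
    proof (rule ccontr)
      assume "\<not> le Z d" hence l: "le d Z" using total by metis
      have l2: "le Z (N d)" using o2[OF l, of "N d"] n1 ed z1 by metis
      have endd: "E (N d) = Z" using n2 ed by metis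
      have nz: "N d \<noteq> Z" using negneg neg_mag[OF EZ] dn by metis
      have "le (mu (N d) d) (mu (N d) Z)" using o4[of "N d" d Z] l l2 endd nz by metis
      moreover have "mu (N d) d = N d" using am5 dd by metis
      moreover have "mu (N d) Z = Z" using precZ endd by metis
      ultimately show False using l2 anti nz by metis
    qed
    show False
    proof (cases "le d p")
      case True
      have "le (mu d d) (mu d p)" using o4[of d d p] True dpos ed dzl by metis
      hence "le d Z" using dd pd mcomm by metis
      thus False using dpos anti dn by metis
    next
      case False
      hence l: "le p d" using total by metis
      have "le (mu p p) (mu p d)" using o4[of p p d] l pp pz zl by metis
      moreover have "le (mu p Z) (mu p p)" using o4[of p Z p] pp pz zl by metis
      ultimately have "mu p p = Z" using pd precZ[OF pz] anti by metis
      hence "p = Z" using pc pq massoc zq by metis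
      thus False using pn by metis
    qed
  qed
  show "U p = One" using cpd d0 zr c_def by metis
  thus "mu p (I p) = One" using i1[OF zl] by metis
qed

lemma F9: "x \<noteq> E x \<Longrightarrow> mu (E x) (U x) = E x"
proof -
  assume zl: "x \<noteq> E x"
  have "E (mu x (U x)) = ad (mu (E x) (U x)) (mu (E (U x)) x)" by (rule am2)
  moreover have "mu (E (U x)) x = mu (E x) (U x)" using am3[OF zl] massoc mcomm i1[OF zl] by metis
  ultimately show ?thesis using u1[OF zl] midem magmul ee by metis
qed

lemma mulP: assumes A: "E A = A" and P1: "P = ad p (E P)" and pz: "E p = Z"
   and l1: "le (E P) p" and l2: "le Z p" and l3: "le p P"
  shows "mu A P = mu A p"
proof -
  have s: "ad (mu A p) (mu A (E P)) = ad (ad (mu A (ad p (E P))) (mu (E A) p)) (mu (E A) (E P))" by (rule am4)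
  have "le (mu (E A) (E P)) (mu (E A) p)" using o5[of "E P" p A] l1 refl ee by metis
  hence k: "ad (mu A (E P)) (mu A p) = mu A p" using mag_le magmul A ee by metis
  have "ad (mu A P) (mu A p) = mu A p" using s k A P1 aassoc acomm by metis
  hence a: "le (mu A P) (mu A p)" using mag_le magmul A by metis
  have "le (mu (E A) p) (mu (E A) P)" using o5[of p P A] pz l2 l3 by metis
  thus ?thesis using a A anti by metis
qed

lemma cancel: assumes A: "E A = A" and B: "E B = B" and zl: "P \<noteq> E P" and pos: "le (E P) P"
  and h: "le (mu A P) (mu B P)" shows "le A B"
proof -
  obtain p where P1: "P = ad p (E P)" and pz: "E p = Z" using e5 Z_def by metis
  have l1: "le (E P) p"
  proof (rule ccontr)
    assume "\<not> le (E P) p" hence "le p (E P)" using total by metis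
    hence "le P (E P)" using o2[of p "E P" "E P"] P1 midem ee by metis
    thus False using pos anti zl by metis
  qed
  have l2: "le Z p" using trans Z_le l1 ee by metis
  have pn: "p \<noteq> Z" using P1 z1 zl by metis
  have l3: "le p P" using o2[of Z "E P" p] Z_le P1 acomm z1 ee by metis
  have h2: "le (mu A p) (mu B p)" using h mulP[OF A P1 pz l1 l2 l3] mulP[OF B P1 pz l1 l2 l3] by metis
  define q where "q = I p"
  have pq: "mu p q = One" using u_prec(2)[OF pz pn l2] q_def by metis
  have qzl: "q \<noteq> E q"
  proof
    assume "q = E q"
    hence "E One = One" using pq magmul2 by metis
    thus False using one_zl by metis
  qed
  have cA: "mu q (mu A p) = A" using pq massoc mcomm one2 by metis
  have cB: "mu q (mu B p) = B" using pq massoc mcomm one2 by metis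
  show ?thesis
  proof (cases "le (E q) q")
    case True
    thus ?thesis using o4[of q "mu A p" "mu B p"] qzl h2 cA cB by metis
  next
    case False
    hence "le q (E q)" using total by metis
    hence nq: "le (E (N q)) (N q)" using o2[of q "E q" "N q"] n1 n2 e1 acomm by metis
    have nzl: "E (N q) \<noteq> N q" using n2 negneg neg_mag ee qzl by metis
    have "le (mu (N q) (mu A p)) (mu (N q) (mu B p))" using o4 nq nzl h2 by metis
    thus ?thesis using am5 cA cB neg_mag A B by metis
  qed
qed




lemma absx: assumes zl: "x \<noteq> E x"
  shows "\<exists>X. X \<noteq> E X \<and> le (E X) X \<and> mu (E (U x)) X = E x \<and> (\<forall>m. E m = m \<longrightarrow> mu m x = mu m X)"
proof -
  have R: "mu (E (U x)) x = E x" using am3[OF zl] massoc mcomm i1[OF zl] F9[OF zl] by metis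
  show ?thesis
  proof (cases "le (E x) x")
    case True thus ?thesis using zl R by metis
  next
    case False
    hence "le x (E x)" using total by metis
    hence nq: "le (E (N x)) (N x)" using o2[of x "E x" "N x"] n1 n2 e1 acomm by metis
    have nzl: "N x \<noteq> E (N x)" using n2 negneg neg_mag ee zl by metis
    have r2: "mu (E (U x)) (N x) = E x" using negmul R neg_mag ee by metis
    have "\<forall>m. E m = m \<longrightarrow> mu m x = mu m (N x)" using negmul neg_mag magmul by metis
    thus ?thesis using nq nzl r2 by metis
  qed
qed

lemma main: assumes zx: "x \<noteq> E x" and zy: "y \<noteq> E y" and h: "le (mu (E x) y) (mu (E y) x)"
  shows "le (relunc ad mu x) (relunc ad mu y)"
proof -
  obtain X where X1: "X \<noteq> E X" and X2: "le (E X) X" and X3: "mu (E (U x)) X = E x"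
    and X4: "\<forall>m. E m = m \<longrightarrow> mu m x = mu m X" using absx[OF zx] by blast
  obtain Y where Y1: "Y \<noteq> E Y" and Y2: "le (E Y) Y" and Y3: "mu (E (U y)) Y = E y"
    and Y4: "\<forall>m. E m = m \<longrightarrow> mu m y = mu m Y" using absx[OF zy] by blast
  have h2: "le (mu (E x) Y) (mu (E y) X)" using h X4 Y4 ee by metis
  have "mu (E x) Y = mu (mu (E (U x)) Y) X" using X3 massoc mcomm by metis
  hence "le (mu (mu (E (U x)) Y) X) (mu (E y) X)" using h2 by metis
  hence "le (mu (E (U x)) Y) (E y)" using cancel[OF magmul[OF ee] ee X1 X2] by metis
  hence "le (mu (E (U x)) Y) (mu (E (U y)) Y)" using Y3 by metis
  hence "le (E (U x)) (E (U y))" using cancel[OF ee ee Y1 Y2] by metis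
  thus ?thesis unfolding relunc_def using zx zy by simp
qed


end

theorem mainTheorem8:
  fixes ad mu :: "'a \<Rightarrow> 'a \<Rightarrow> 'a" and le :: "'a \<Rightarrow> 'a \<Rightarrow> bool" and x y :: 'a
  assumes "solid ad mu le"
    and "x \<noteq> mag ad x" and "y \<noteq> mag ad y"
    and "le (mu (mag ad x) y) (mu (mag ad y) x)"
  shows "le (relunc ad mu x) (relunc ad mu y)"
proof -
  interpret sl ad mu le by (rule sl.intro) (rule assms(1))
  show ?thesis using main assms by blast
qed

end
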